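(* Let $\mathcal{D}\subset\mathbb{R}^N$ be open, bounded, connected, $x_0\in\mathcal{D}$, $\epsilon\in(0,1)$. Define on $(\bar\Omega,\bar{\mathcal{F}},\bar{\mathbb{P}})$ the random times $\bar\tau_0=0$, $$\bar\tau_{k+1}(\omega_{\mathcal{B}},\{w_i\}_{i\ge1})=\min\Big\{t\ge\bar\tau_k:\ \big|\mathcal{B}^N_t(\omega_{\mathcal{B}})-\mathcal{B}^N_{\bar\tau_k}(\omega_{\mathcal{B}})\big|=\big(\epsilon\wedge\operatorname{dist}(x_0+\mathcal{B}^N_{\bar\tau_k}(\omega_{\mathcal{B}}),\partial\mathcal{D})\big)|w_{k+1}|\Big\},$$ where $\bar\tau_k$ stands for $\bar\tau_k(\omega_{\mathcal{B}},\{w_i\})$, and $\bar\tau(\omega_{\mathcal{B}},\omega)=\min\{t\ge0:\ x_0+\mathcal{B}^N_t(\omega_{\mathcal{B}})\in\partial\mathcal{D}\}$. Then each $\bar\tau_k$ and $\bar\tau$ is a stopping time on $(\bar\Omega,\bar{\mathcal{F}},\bar{\mathbb{P}})$, and $\bar\tau_k\to\bar\tau$ as $k\to\infty$, $\bar{\mathbb{P}}$-a.s.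
   Context: $\{\mathcal{B}^N_t\}_{t\ge0}$ is a standard $N$-dimensional Brownian motion (started at $0$, continuous paths) on a probability space $(\Omega_{\mathcal{B}},\mathcal{F}_{\mathcal{B}},\mathbb{P}_{\mathcal{B}})$ with its filtration $\{\mathcal{F}_t\}_{t\ge0}$ (to which it is adapted). $(\Omega,\mathcal{F},\mathbb{P})$ is the countable product $\Omega=B_1(0)^{\mathbb{N}}$, $\omega=\{w_i\}_{i\ge1}$, of copies of $B_1(0)\subset\mathbb{R}^N$ with Borel $\sigma$-algebra and normalised Lebesgue measure. $(\bar\Omega,\bar{\mathcal{F}},\bar{\mathbb{P}})=(\Omega_{\mathcal{B}},\mathcal{F}_{\mathcal{B}},\mathbb{P}_{\mathcal{B}})\times(\Omega,\mathcal{F},\mathbb{P})$, with filtration $\bar{\mathcal{F}}_t=\mathcal{F}_t\times\mathcal{F}$. A stopping time on $(\bar\Omega,\bar{\mathcal{F}},\bar{\mathbb{P}})$ is a random variable $\bar\tau:\bar\Omega\to[0,\infty]$ with $\{\bar\tau\le t\}\in\bar{\mathcal{F}}_t$ for all $t\ge0$ and $\bar{\mathbb{P}}(\bar\tau=+\infty)=0$. *)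

theory Defs
  imports "HOL-Probability.Probability"
begin

definition is_filtration :: "'a measure \<Rightarrow> (real \<Rightarrow> 'a measure) \<Rightarrow> bool" where
  "is_filtration M F \<longleftrightarrow>
     (\<forall>t\<ge>0. space (F t) = space M \<and> sets (F t) \<subseteq> sets M) \<and>
     (\<forall>s t. 0 \<le> s \<longrightarrow> s \<le> t \<longrightarrow> sets (F s) \<subseteq> sets (F t))"

text \<open>Standard N-dimensional Brownian motion (N = CARD('n)) started at 0 with continuous
  paths, adapted to the filtration F, with increments B t - B s (s \<le> t) independent of F s
  and distributed as N(0, (t - s) I).\<close>
definition brownian_motion ::
  "'a measure \<Rightarrow> (real \<Rightarrow> 'a measure) \<Rightarrow> (real \<Rightarrow> 'a \<Rightarrow> real^'n) \<Rightarrow> bool" where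
  "brownian_motion M F B \<longleftrightarrow>
     prob_space M \<and> is_filtration M F \<and>
     (\<forall>t\<ge>0. B t \<in> borel_measurable (F t)) \<and>
     (\<forall>\<omega>\<in>space M. B 0 \<omega> = 0 \<and> continuous_on {0..} (\<lambda>t. B t \<omega>)) \<and>
     (\<forall>s t. 0 \<le> s \<longrightarrow> s < t \<longrightarrow>
        distr M borel (\<lambda>\<omega>. B t \<omega> - B s \<omega>) =
          density lborel (\<lambda>x. ennreal (\<Prod>i\<in>UNIV. normal_density 0 (sqrt (t - s)) (x $ i))) \<and>
        (\<forall>A\<in>sets (F s). \<forall>C\<in>sets borel.
           measure M (A \<inter> {\<omega>\<in>space M. B t \<omega> - B s \<omega> \<in> C}) =
           measure M A * measure M {\<omega>\<in>space M. B t \<omega> - B s \<omega> \<in> C}))"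

definition ball_seq_space :: "(nat \<Rightarrow> real^'n) measure" where
  "ball_seq_space = PiM UNIV (\<lambda>_. uniform_measure (restrict_space lborel (ball 0 1)) (ball 0 1))"

definition bar_space :: "'a measure \<Rightarrow> ('a \<times> (nat \<Rightarrow> real^'n)) measure" where
  "bar_space M = M \<Otimes>\<^sub>M ball_seq_space"

definition bar_filtration ::
  "(real \<Rightarrow> 'a measure) \<Rightarrow> real \<Rightarrow> ('a \<times> (nat \<Rightarrow> real^'n)) measure" where
  "bar_filtration F t = F t \<Otimes>\<^sub>M ball_seq_space"

definition is_stopping_time ::
  "'b measure \<Rightarrow> (real \<Rightarrow> 'b measure) \<Rightarrow> ('b \<Rightarrow> ennreal) \<Rightarrow> bool" where
  "is_stopping_time P G T \<longleftrightarrow>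
     T \<in> borel_measurable P \<and>
     (\<forall>t\<ge>0. {x\<in>space P. T x \<le> ennreal t} \<in> sets (G t)) \<and>
     emeasure P {x\<in>space P. T x = \<infinity>} = 0"

text \<open>The random times tau_k (values in [0,\<infinity>], min of empty set = \<infinity>).
  Here w_{k+1} is the k-th coordinate ws k of the sequence ws.\<close>
primrec tau_seq ::
  "(real^'n) set \<Rightarrow> real^'n \<Rightarrow> real \<Rightarrow> (real \<Rightarrow> 'a \<Rightarrow> real^'n) \<Rightarrow> nat \<Rightarrow>
    'a \<times> (nat \<Rightarrow> real^'n) \<Rightarrow> ennreal" where
  "tau_seq D x0 \<epsilon> B 0 = (\<lambda>_. 0)"
| "tau_seq D x0 \<epsilon> B (Suc k) = (\<lambda>(\<omega>, ws).
     (let s = tau_seq D x0 \<epsilon> B k (\<omega>, ws) in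
      if s = \<infinity> then \<infinity>
      else Inf {ennreal t | t. enn2real s \<le> t \<and>
              norm (B t \<omega> - B (enn2real s) \<omega>) =
              min \<epsilon> (infdist (x0 + B (enn2real s) \<omega>) (frontier D)) * norm (ws k)}))"

definition tau_exit ::
  "(real^'n) set \<Rightarrow> real^'n \<Rightarrow> (real \<Rightarrow> 'a \<Rightarrow> real^'n) \<Rightarrow> 'a \<times> (nat \<Rightarrow> real^'n) \<Rightarrow> ennreal" where
  "tau_exit D x0 B = (\<lambda>(\<omega>, ws). Inf {ennreal t | t. 0 \<le> t \<and> x0 + B t \<omega> \<in> frontier D})"

end

theory Submission
  imports Defs
begin


abbreviation "Ub \<equiv> uniform_measure (restrict_space lborel (ball 0 1)) (ball (0::real^'n) 1)"

lemma uvn: "unit_ball_vol (real CARD('n)) \<noteq> 0"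
proof -
  have "unit_ball_vol (real CARD('n)) > 0" by simp
  then show ?thesis by linarith
qed

lemma Ub_prob: "prob_space (Ub :: (real^'n) measure)"
  apply (rule prob_space_uniform_measure)
  using uvn[where 'n='n]
  apply (simp_all add: emeasure_restrict_space emeasure_ball)
  done

lemma Ub_space: "space (Ub :: (real^'n) measure) = ball 0 1"
  by (simp add: space_restrict_space)

lemma Ub_half: "emeasure (Ub :: (real^'n) measure) (ball 0 (1/2)) = ennreal ((1/2) ^ CARD('n))"
proof -
  have s: "ball (0::real^'n) (1/2) \<in> sets (restrict_space lborel (ball 0 1))"
    by (auto simp: sets_restrict_space_iff)
  have s1: "ball (0::real^'n) 1 \<in> sets (restrict_space lborel (ball 0 1))"
    by (auto simp: sets_restrict_space_iff)
  have i: "ball (0::real^'n) 1 \<inter> ball 0 (1/2) = ball 0 (1/2)" by auto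
  have e1: "emeasure (restrict_space lborel (ball 0 1)) (ball (0::real^'n) 1) = ennreal (unit_ball_vol (real CARD('n)))"
    by (simp add: emeasure_restrict_space emeasure_ball)
  have e2: "emeasure (restrict_space lborel (ball 0 1)) (ball (0::real^'n) (1/2)) = ennreal (unit_ball_vol (real CARD('n)) * (1/2)^CARD('n))"
    by (subst emeasure_restrict_space) (auto simp: emeasure_ball)
  have p: "unit_ball_vol (real CARD('n)) > 0" by simp
  show ?thesis
    using s s1 p uvn[where 'n='n] apply (simp add: i e1 e2 del: power_one_over)
    by (simp add: divide_ennreal uvn del: power_one_over)
qed

lemma Ub_norm: "norm \<in> borel_measurable (Ub :: (real^'n) measure)"
  apply (subst measurable_cong_sets[OF sets_uniform_measure refl])
  apply (rule measurable_restrict_space1)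
  apply simp
  done


lemma le_geom_zero:
  fixes x :: ennreal and q :: real
  assumes "0 \<le> q" "q < 1" "\<And>n. x \<le> ennreal (q ^ n)"
  shows "x = 0"
proof -
  have "(\<lambda>n. ennreal (q ^ n)) \<longlonglongrightarrow> ennreal 0"
    by (rule tendsto_ennrealI) (rule LIMSEQ_power_zero, use assms in simp)
  then have "x \<le> 0"
    by (intro tendsto_lowerbound[OF _ _ trivial_limit_sequentially]) (use assms(3) in \<open>auto simp: always_eventually\<close>)
  then show ?thesis by simp
qed

lemma W_prob: "prob_space (ball_seq_space :: (nat \<Rightarrow> real^'n) measure)"
  unfolding ball_seq_space_def by (intro prob_space_PiM Ub_prob)

lemma W_space: "space (ball_seq_space :: (nat \<Rightarrow> real^'n) measure) = {ws. \<forall>k. ws k \<in> ball 0 1}"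
  unfolding ball_seq_space_def by (auto simp: space_PiM PiE_def Pi_def space_restrict_space)

lemma W_comp_meas: "(\<lambda>ws. ws k) \<in> measurable (ball_seq_space :: (nat \<Rightarrow> real^'n) measure) Ub"
  unfolding ball_seq_space_def by (rule measurable_component_singleton) simp

lemma W_norm_meas: "(\<lambda>ws. norm (ws k)) \<in> borel_measurable (ball_seq_space :: (nat \<Rightarrow> real^'n) measure)"
  by (rule measurable_compose[OF W_comp_meas Ub_norm])

lemma W_null: "{ws\<in>space (ball_seq_space :: (nat \<Rightarrow> real^'n) measure). \<exists>K. \<forall>k\<ge>K. norm (ws k) < 1/2}
   \<in> null_sets ball_seq_space"
proof -
  let ?W = "ball_seq_space :: (nat \<Rightarrow> real^'n) measure"
  let ?q = "((1::real)/2) ^ CARD('n)"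
  define S where "S K = {ws\<in>space ?W. \<forall>k\<ge>K. norm (ws k) < 1/2}" for K
  have eq: "{ws\<in>space ?W. \<exists>K. \<forall>k\<ge>K. norm (ws k) < 1/2} = (\<Union>K. S K)"
    by (auto simp: S_def)
  have "S K \<in> null_sets ?W" for K
  proof -
    have Smeas: "S K \<in> sets ?W"
      unfolding S_def using W_norm_meas[where 'n='n] by measurable
    have "emeasure ?W (S K) \<le> ennreal (?q ^ n)" for n
    proof -
      let ?J = "{K..<K+n}"
      let ?E = "prod_emb UNIV (\<lambda>_. Ub) ?J (Pi\<^sub>E ?J (\<lambda>_. ball (0::real^'n) (1/2)))"
      have sub: "S K \<subseteq> ?E"
        by (auto simp: S_def prod_emb_def W_space PiE_def Pi_def space_restrict_space ball_seq_space_def space_PiM)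
      have bs: "ball (0::real^'n) (1/2) \<in> sets Ub"
        by (auto simp: sets_restrict_space_iff)
      have "emeasure ?W ?E = (\<Prod>i\<in>?J. emeasure Ub (ball (0::real^'n) (1/2)))"
        unfolding ball_seq_space_def
        by (rule emeasure_PiM_emb) (use bs in \<open>auto simp: Ub_prob\<close>)
      also have "\<dots> = ennreal (?q ^ n)"
        by (simp add: Ub_half ennreal_power del: power_one_over)
      finally have "emeasure ?W ?E = ennreal (?q ^ n)" .
      moreover have "?E \<in> sets ?W"
        unfolding ball_seq_space_def by (rule sets_PiM_I) (use bs in auto)
      ultimately show ?thesis using sub by (metis emeasure_mono)
    qed
    then have "emeasure ?W (S K) = 0"
      by (intro le_geom_zero[of ?q]) (auto simp: power_le_one_iff power_less_one_iff)
    with Smeas show ?thesis by auto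
  qed
  then show ?thesis unfolding eq by auto
qed


lemma bm_prob: "brownian_motion M F B \<Longrightarrow> prob_space M"
  by (simp add: brownian_motion_def)

lemma bm_space: "brownian_motion M F B \<Longrightarrow> 0 \<le> t \<Longrightarrow> space (F t) = space M"
  by (simp add: brownian_motion_def is_filtration_def)

lemma bm_sets: "brownian_motion M F B \<Longrightarrow> 0 \<le> t \<Longrightarrow> sets (F t) \<subseteq> sets M"
  by (simp add: brownian_motion_def is_filtration_def)

lemma bm_mono: "brownian_motion M F B \<Longrightarrow> 0 \<le> s \<Longrightarrow> s \<le> t \<Longrightarrow> sets (F s) \<subseteq> sets (F t)"
  by (simp add: brownian_motion_def is_filtration_def)

lemma bm_cont: "brownian_motion M F B \<Longrightarrow> \<omega> \<in> space M \<Longrightarrow> continuous_on {0..} (\<lambda>t. B t \<omega>)"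
  by (simp add: brownian_motion_def)

lemma bm_zero: "brownian_motion M F B \<Longrightarrow> \<omega> \<in> space M \<Longrightarrow> B 0 \<omega> = 0"
  by (simp add: brownian_motion_def)

lemma bm_measF: assumes "brownian_motion M F B" "0 \<le> u" "u \<le> t"
  shows "B u \<in> borel_measurable (F t)"
proof -
  have "B u \<in> borel_measurable (F u)" using assms by (simp add: brownian_motion_def)
  moreover have "subalgebra (F t) (F u)"
    using assms bm_space[OF assms(1)] bm_mono[OF assms(1)] by (simp add: subalgebra_def)
  ultimately show ?thesis by (rule measurable_from_subalg[rotated])
qed

lemma bm_meas: assumes "brownian_motion M F B" "0 \<le> u"
  shows "B u \<in> borel_measurable M"
proof -
  have "B u \<in> borel_measurable (F u)" using assms by (simp add: brownian_motion_def)
  moreover have "subalgebra M (F u)"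
    using assms bm_space[OF assms(1)] bm_sets[OF assms(1)] by (simp add: subalgebra_def)
  ultimately show ?thesis by (rule measurable_from_subalg[rotated])
qed

lemma bm_incr_null:
  fixes B :: "real \<Rightarrow> 'a \<Rightarrow> real^'n"
  assumes bm: "brownian_motion M F B" and R: "0 \<le> R"
  shows "{\<omega>\<in>space M. \<forall>j::nat. norm (B (real j + 1) \<omega> - B (real j) \<omega>) \<le> R} \<in> null_sets M"
proof -
  interpret P: prob_space M using bm by (rule bm_prob)
  have key: "\<forall>s t. 0 \<le> s \<longrightarrow> s < t \<longrightarrow>
        distr M borel (\<lambda>\<omega>. B t \<omega> - B s \<omega>) =
          density lborel (\<lambda>x. ennreal (\<Prod>i\<in>UNIV. normal_density 0 (sqrt (t - s)) (x $ i))) \<and>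
        (\<forall>A\<in>sets (F s). \<forall>C\<in>sets borel.
           measure M (A \<inter> {\<omega>\<in>space M. B t \<omega> - B s \<omega> \<in> C}) =
           measure M A * measure M {\<omega>\<in>space M. B t \<omega> - B s \<omega> \<in> C})"
    using bm unfolding brownian_motion_def by blast
  have key1: "distr M borel (\<lambda>\<omega>. B (real j + 1) \<omega> - B (real j) \<omega>) =
          density lborel (\<lambda>x. ennreal (\<Prod>i\<in>UNIV. normal_density 0 (sqrt (real j + 1 - real j)) (x $ i)))" for j
    using key[rule_format, of "real j" "real j + 1"] by simp
  have key2: "\<forall>A\<in>sets (F (real j)). \<forall>C\<in>sets borel.
           measure M (A \<inter> {\<omega>\<in>space M. B (real j + 1) \<omega> - B (real j) \<omega> \<in> C}) =
           measure M A * measure M {\<omega>\<in>space M. B (real j + 1) \<omega> - B (real j) \<omega> \<in> C}" for j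
    using key[rule_format, of "real j" "real j + 1"] by simp
  define Y where "Y j = (\<lambda>\<omega>. B (real j + 1) \<omega> - B (real j) \<omega>)" for j
  define C where "C = cball (0::real^'n) R"
  define f where "f x = ennreal (\<Prod>i\<in>UNIV. normal_density 0 1 (x $ i))" for x :: "real^'n"
  define Q where "Q = density lborel f"
  have Ymeas: "Y j \<in> borel_measurable M" for j
    unfolding Y_def by (intro borel_measurable_diff bm_meas[OF bm]) auto
  have dist: "distr M borel (Y j) = Q" for j
  proof -
    have "distr M borel (\<lambda>\<omega>. B (real j + 1) \<omega> - B (real j) \<omega>) =
          density lborel (\<lambda>x. ennreal (\<Prod>i\<in>UNIV. normal_density 0 (sqrt (real j + 1 - real j)) (x $ i)))"
      by (rule key1)
    then show ?thesis unfolding Y_def Q_def f_def by simp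
  qed
  have Qprob: "prob_space Q"
    using P.prob_space_distr[OF Ymeas[of 0]] dist[of 0] by simp
  have Cs: "C \<in> sets borel" by (simp add: C_def)
  have fmeas: "f \<in> borel_measurable lborel" unfolding f_def by measurable
  have fpos: "f x > 0" for x
    unfolding f_def by (simp add: normal_density_pos prod_pos)
  have Qc: "emeasure Q (- C) \<noteq> 0"
  proof
    assume "emeasure Q (- C) = 0"
    then have "(\<integral>\<^sup>+x. f x * indicator (-C) x \<partial>lborel) = 0"
      unfolding Q_def using Cs fmeas by (subst (asm) emeasure_density) auto
    then have "AE x in lborel. f x * indicator (-C) x = 0"
      using Cs fmeas by (subst (asm) nn_integral_0_iff_AE) auto
    then have "AE x in lborel. x \<in> C"
    proof (rule AE_mp)
      show "AE x in lborel. f x * indicator (-C) x = 0 \<longrightarrow> x \<in> C"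
        proof (intro AE_I2 impI)
        fix x assume h: "f x * indicator (-C) x = 0"
        show "x \<in> C"
        proof (rule ccontr)
          assume "x \<notin> C"
          then have "f x * indicator (-C) x = f x" by simp
          with h fpos[of x] show False by simp
        qed
      qed
    qed
    then obtain N where N: "{x \<in> space lborel. x \<notin> C} \<subseteq> N" "emeasure lborel N = 0" "N \<in> sets lborel"
      by (auto elim: AE_E)
    define c :: "real^'n" where "c = (\<chi> i. R + 2)"
    have "ball c 1 \<subseteq> N"
    proof
      fix y assume y: "y \<in> ball c 1"
      obtain i :: 'n where True by simp
      have "R + 2 \<le> norm c" using component_le_norm_cart[of c i] R by (simp add: c_def)
      moreover have "norm c \<le> norm y + dist c y" by (simp add: dist_norm norm_triangle_sub)
      ultimately have "norm y > R" using y by simp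
      then show "y \<in> N" using N(1) by (auto simp: C_def)
    qed
    then have "emeasure lborel (ball c 1) \<le> 0"
      using N by (metis emeasure_mono)
    moreover have "emeasure lborel (ball c 1) > 0"
      by (simp add: emeasure_ball)
    ultimately show False by simp
  qed
  define p where "p = measure Q C"
  have p1: "p < 1"
  proof -
    interpret Q: prob_space Q by (rule Qprob)
    have sQ: "space Q = UNIV" by (simp add: Q_def)
    have "Q.prob (space Q - C) = 1 - p" unfolding p_def
      using Cs by (intro Q.prob_compl) (simp add: Q_def)
    moreover have "Q.prob (- C) > 0"
      using Qc Q.emeasure_eq_measure by (simp add: zero_less_measure_iff)
    ultimately show ?thesis using sQ by (simp add: Compl_eq_Diff_UNIV)
  qed
  have p0: "0 \<le> p" by (simp add: p_def)
  have pY: "measure M {\<omega>\<in>space M. Y j \<omega> \<in> C} = p" for j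
  proof -
    have "measure (distr M borel (Y j)) C = measure M (Y j -` C \<inter> space M)"
      by (rule measure_distr[OF Ymeas Cs])
    then show ?thesis using dist[of j] by (simp add: p_def vimage_def Int_def conj_commute)
  qed
  define A where "A m = {\<omega>\<in>space M. \<forall>j<m. Y j \<omega> \<in> C}" for m
  have AF: "A m \<in> sets (F (real m))" for m
  proof -
    have "Y j \<in> borel_measurable (F (real m))" if "j < m" for j
      unfolding Y_def using that by (intro borel_measurable_diff bm_measF[OF bm]) auto
    then have "{\<omega>\<in>space (F (real m)). \<forall>j\<in>{..<m}. Y j \<omega> \<in> C} \<in> sets (F (real m))"
    proof (intro sets.sets_Collect_finite_All)
      fix j assume "j \<in> {..<m}"
      then have "Y j -` C \<inter> space (F (real m)) \<in> sets (F (real m))"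
        using Cs \<open>\<And>j. j < m \<Longrightarrow> Y j \<in> borel_measurable (F (real m))\<close> by (intro measurable_sets) auto
      moreover have e: "{\<omega>\<in>space (F (real m)). Y j \<omega> \<in> C} = Y j -` C \<inter> space (F (real m))" by auto
      ultimately show "{\<omega>\<in>space (F (real m)). Y j \<omega> \<in> C} \<in> sets (F (real m))"
        by (simp only: e)
    qed simp
    moreover have sp: "space (F (real m)) = space M" by (rule bm_space[OF bm]) simp
    ultimately show ?thesis by (simp only: A_def sp lessThan_iff Ball_def)
  qed
  have Am: "measure M (A m) = p ^ m" for m
  proof (induction m)
    case 0 then show ?case by (simp add: A_def P.prob_space)
  next
    case (Suc m)
    have eq: "A (Suc m) = A m \<inter> {\<omega>\<in>space M. B (real m + 1) \<omega> - B (real m) \<omega> \<in> C}"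
      unfolding A_def Y_def by (auto simp: less_Suc_eq)
    have "measure M (A m \<inter> {\<omega>\<in>space M. B (real m + 1) \<omega> - B (real m) \<omega> \<in> C}) =
          measure M (A m) * measure M {\<omega>\<in>space M. B (real m + 1) \<omega> - B (real m) \<omega> \<in> C}"
      by (rule key2[of m, rule_format, OF AF[of m] Cs])
    then show ?case using eq Suc.IH pY[of m] unfolding Y_def by simp
  qed
  define G where "G = {\<omega>\<in>space M. \<forall>j::nat. norm (B (real j + 1) \<omega> - B (real j) \<omega>) \<le> R}"
  have GA: "G = (\<Inter>m. A m) \<inter> space M"
  proof
    show "G \<subseteq> (\<Inter>m. A m) \<inter> space M"
    proof
      fix \<omega> assume "\<omega> \<in> G"
      then have w: "\<omega> \<in> space M" "\<And>j. norm (B (real j + 1) \<omega> - B (real j) \<omega>) \<le> R"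
        unfolding G_def by auto
      have "\<omega> \<in> A m" for m
        unfolding A_def Y_def C_def using w by (simp add: mem_cball_0)
      then show "\<omega> \<in> (\<Inter>m. A m) \<inter> space M" using w by blast
    qed
    show "(\<Inter>m. A m) \<inter> space M \<subseteq> G"
    proof
      fix \<omega> assume h: "\<omega> \<in> (\<Inter>m. A m) \<inter> space M"
      have "norm (B (real j + 1) \<omega> - B (real j) \<omega>) \<le> R" for j
      proof -
        have "\<omega> \<in> A (Suc j)" using h by blast
        then have "Y j \<omega> \<in> C" unfolding A_def by simp
        then show ?thesis unfolding Y_def C_def by (simp add: mem_cball_0)
      qed
      then show "\<omega> \<in> G" using h unfolding G_def by simp
    qed
  qed
  have Asets: "A m \<in> sets M" for m
    by (rule subsetD[OF bm_sets[OF bm] AF]) simp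
  have "(\<Inter>m. A m) \<in> sets M" using Asets by (intro sets.countable_INT) blast+
  then have Gs: "G \<in> sets M" unfolding GA by (intro sets.Int sets.top)
  have "emeasure M G \<le> ennreal (p ^ m)" for m
  proof -
    have "G \<subseteq> A m" unfolding GA by blast
    then have "emeasure M G \<le> emeasure M (A m)" using Asets[of m] by (rule emeasure_mono)
    also have "\<dots> = ennreal (p ^ m)" using Am[of m] P.emeasure_eq_measure by simp
    finally show ?thesis .
  qed
  then have "emeasure M G = 0" using p0 p1 by (intro le_geom_zero) auto
  then show ?thesis using Gs unfolding G_def by (simp add: null_sets_def)
qed


lemma inf_ennreal_min:
  assumes "m \<in> S" "\<And>t. t \<in> S \<Longrightarrow> m \<le> t"
  shows "Inf (ennreal ` S) = ennreal m"
proof (rule antisym)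
  show "Inf (ennreal ` S) \<le> ennreal m" using assms(1) by (intro Inf_lower) auto
  show "ennreal m \<le> Inf (ennreal ` S)" using assms(2) by (intro Inf_greatest) (auto intro: ennreal_leI)
qed

lemma closed_min_ex:
  fixes S :: "real set"
  assumes "closed S" "S \<noteq> {}" "\<And>u. u \<in> S \<Longrightarrow> 0 \<le> u"
  shows "Inf S \<in> S \<and> (\<forall>u\<in>S. Inf S \<le> u)"
proof -
  have bb: "bdd_below S" using assms(3) by (auto simp: bdd_below_def)
  show ?thesis using closed_contains_Inf[OF assms(2) bb assms(1)] cInf_lower[OF _ bb] by auto
qed

lemma inf_ennreal_closed:
  fixes S :: "real set"
  assumes "closed S" "S \<noteq> {}" "\<And>u. u \<in> S \<Longrightarrow> 0 \<le> u"
  shows "Inf (ennreal ` S) = ennreal (Inf S)"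
  using closed_min_ex[OF assms] by (intro inf_ennreal_min) auto

lemma inf_ennreal_le:
  fixes S :: "real set"
  assumes "closed S" "\<And>u. u \<in> S \<Longrightarrow> 0 \<le> u" "0 \<le> t"
  shows "Inf (ennreal ` S) \<le> ennreal t \<longleftrightarrow> (\<exists>u\<in>S. u \<le> t)"
proof
  assume h: "Inf (ennreal ` S) \<le> ennreal t"
  show "\<exists>u\<in>S. u \<le> t"
  proof (cases "S = {}")
    case True then show ?thesis using h by (simp add: top_unique)
  next
    case False
    note m = closed_min_ex[OF assms(1) False assms(2)]
    have "Inf (ennreal ` S) = ennreal (Inf S)" by (rule inf_ennreal_closed[OF assms(1) False assms(2)])
    then have "Inf S \<le> t" using h assms(3) by simp
    then show ?thesis using m by blast
  qed
next
  assume "\<exists>u\<in>S. u \<le> t"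
  then obtain u where u: "u \<in> S" "u \<le> t" by blast
  have "Inf (ennreal ` S) \<le> ennreal u" using u by (intro Inf_lower) auto
  also have "\<dots> \<le> ennreal t" using u by (intro ennreal_leI)
  finally show "Inf (ennreal ` S) \<le> ennreal t" .
qed

definition Qt :: "real \<Rightarrow> real set" where
  "Qt t = insert t {q. q \<in> \<rat> \<and> 0 \<le> q \<and> q \<le> t}"

lemma countable_Qt: "countable (Qt t)"
proof -
  have "{q. q \<in> \<rat> \<and> 0 \<le> q \<and> q \<le> t} \<subseteq> \<rat>" by auto
  then have "countable {q. q \<in> \<rat> \<and> 0 \<le> q \<and> q \<le> t}" using countable_rat countable_subset by blast
  then show ?thesis unfolding Qt_def by simp
qed

lemma Qt_bounds: "q \<in> Qt t \<Longrightarrow> 0 \<le> t \<Longrightarrow> 0 \<le> q \<and> q \<le> t"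
  unfolding Qt_def by auto

lemma dense_char:
  fixes h :: "real \<Rightarrow> real"
  assumes cont: "continuous_on {s..t} h" and s: "0 \<le> s" "s \<le> t"
  shows "(\<exists>u\<in>{s..t}. 0 \<le> h u) \<longleftrightarrow> (\<forall>m::nat. \<exists>q\<in>Qt t. s \<le> q \<and> q \<le> t \<and> -1/(real m+1) < h q)"
proof
  assume "\<exists>u\<in>{s..t}. 0 \<le> h u"
  then obtain u where u: "s \<le> u" "u \<le> t" "0 \<le> h u" by auto
  show "\<forall>m::nat. \<exists>q\<in>Qt t. s \<le> q \<and> q \<le> t \<and> -1/(real m+1) < h q"
  proof
    fix m :: nat
    have ep: "1/(real m+1) > 0" by simp
    show "\<exists>q\<in>Qt t. s \<le> q \<and> q \<le> t \<and> -1/(real m+1) < h q"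
    proof (cases "u = t")
      case True
      have n0: "0 < 1/(real m+1)" by simp
      have ht: "0 \<le> h t" using u True by simp
      have "-1/(real m+1) < h t" using n0 ht by (smt (verit) divide_minus_left)
      then show ?thesis using u s True by (intro bexI[of _ t]) (auto simp: Qt_def)
    next
      case False
      then have ut: "u < t" using u by simp
      from cont u obtain d where d: "d > 0" "\<forall>x'\<in>{s..t}. dist x' u < d \<longrightarrow> dist (h x') (h u) < 1/(real m+1)"
        unfolding continuous_on_iff using ep by (metis atLeastAtMost_iff)
      have "u < min (u + d) t" using d ut by simp
      then obtain q where q: "q \<in> \<rat>" "u < q" "q < min (u + d) t" using Rats_dense_in_real by blast
      have qin: "q \<in> {s..t}" using q u by auto
      have "dist q u < d" using q by (simp add: dist_real_def)
      then have "dist (h q) (h u) < 1/(real m+1)" using d qin by blast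
      then have "-1/(real m+1) < h q" using u by (simp add: dist_real_def abs_less_iff)
      moreover have "q \<in> Qt t" using q u s by (auto simp: Qt_def)
      ultimately show ?thesis using q u by (intro bexI[of _ q]) auto
    qed
  qed
next
  assume H: "\<forall>m::nat. \<exists>q\<in>Qt t. s \<le> q \<and> q \<le> t \<and> -1/(real m+1) < h q"
  obtain x where x: "x \<in> {s..t}" "\<forall>y\<in>{s..t}. h y \<le> h x"
    using continuous_attains_sup[OF compact_Icc _ cont] s by auto
  have "0 \<le> h x"
  proof (rule ccontr)
    assume "\<not> 0 \<le> h x"
    then have "0 < - h x" by simp
    then obtain m where m: "inverse (real (Suc m)) < - h x" using reals_Archimedean by blast
    from H obtain q where q: "s \<le> q" "q \<le> t" "-1/(real m+1) < h q" by blast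
    have "h q \<le> h x" using x q by auto
    then show False using m q by (simp add: inverse_eq_divide add.commute)
  qed
  then show "\<exists>u\<in>{s..t}. 0 \<le> h u" using x by blast
qed


lemma hitset_closed:
  fixes b :: "real \<Rightarrow> real^'n"
  assumes cont: "continuous_on {0..} b"
  shows "closed {t. 0 \<le> t \<and> x0 + b t \<in> frontier D}"
proof -
  have c: "continuous_on {0..} (\<lambda>t. x0 + b t)" by (intro continuous_intros cont)
  have "{t. 0 \<le> t \<and> x0 + b t \<in> frontier D} = {0..} \<inter> (\<lambda>t. x0 + b t) -` frontier D" by auto
  then show ?thesis using continuous_closed_preimage[OF c closed_atLeast frontier_closed] by simp
qed

lemma in_D_before:
  fixes b :: "real \<Rightarrow> real^'n"
  assumes cont: "continuous_on {0..} b" and x0: "x0 + b 0 \<in> D" and u: "0 \<le> u"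
    and nf: "\<And>v. 0 \<le> v \<Longrightarrow> v \<le> u \<Longrightarrow> x0 + b v \<notin> frontier D"
  shows "x0 + b u \<in> D"
proof (rule ccontr)
  assume nu: "x0 + b u \<notin> D"
  let ?S = "(\<lambda>v. x0 + b v) ` {0..u}"
  have c: "continuous_on {0..u} (\<lambda>v. x0 + b v)"
    by (intro continuous_intros continuous_on_subset[OF cont]) auto
  have "connected ?S" by (intro connected_continuous_image[OF c] connected_Icc)
  moreover have "?S \<inter> D \<noteq> {}" using x0 u by force
  moreover have "?S - D \<noteq> {}" using nu u by force
  ultimately have "?S \<inter> frontier D \<noteq> {}" by (rule connected_Int_frontier)
  then show False using nf by auto
qed

lemma hit_closed2:
  fixes b :: "real \<Rightarrow> real^'n"
  assumes cont: "continuous_on {0..} b" and s: "0 \<le> s"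
  shows "closed {u. s \<le> u \<and> norm (b u - b s) = r}"
proof -
  have c: "continuous_on {s..} (\<lambda>u. norm (b u - b s))"
    by (intro continuous_intros continuous_on_subset[OF cont]) (use s in auto)
  have "{u. s \<le> u \<and> norm (b u - b s) = r} = {u \<in> {s..}. norm (b u - b s) = r}" by auto
  then show ?thesis using continuous_closed_preimage_constant[OF c closed_atLeast] by simp
qed

lemma hit_char:
  fixes b :: "real \<Rightarrow> real^'n"
  assumes cont: "continuous_on {0..} b" and s: "0 \<le> s" and r: "0 \<le> r" and t: "0 \<le> t"
  shows "Inf (ennreal ` {u. s \<le> u \<and> norm (b u - b s) = r}) \<le> ennreal t \<longleftrightarrow>
         (s \<le> t \<and> (\<exists>u\<in>{s..t}. 0 \<le> norm (b u - b s) - r))"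
proof -
  let ?H = "{u. s \<le> u \<and> norm (b u - b s) = r}"
  have "Inf (ennreal ` ?H) \<le> ennreal t \<longleftrightarrow> (\<exists>u\<in>?H. u \<le> t)"
    using s t by (intro inf_ennreal_le hit_closed2[OF cont s]) auto
  also have "\<dots> \<longleftrightarrow> (s \<le> t \<and> (\<exists>u\<in>{s..t}. 0 \<le> norm (b u - b s) - r))"
  proof
    assume "\<exists>u\<in>?H. u \<le> t"
    then show "s \<le> t \<and> (\<exists>u\<in>{s..t}. 0 \<le> norm (b u - b s) - r)" by force
  next
    assume h: "s \<le> t \<and> (\<exists>u\<in>{s..t}. 0 \<le> norm (b u - b s) - r)"
    then obtain u where u: "s \<le> u" "u \<le> t" "r \<le> norm (b u - b s)" by auto
    have c: "continuous_on {s..u} (\<lambda>v. norm (b v - b s))"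
      by (intro continuous_intros continuous_on_subset[OF cont]) (use s in auto)
    obtain v where "s \<le> v" "v \<le> u" "norm (b v - b s) = r"
      using IVT'[of "\<lambda>v. norm (b v - b s)" s r u] c u r by auto
    then show "\<exists>u\<in>?H. u \<le> t" using u by (intro bexI[of _ v]) auto
  qed
  finally show ?thesis .
qed

lemma exit_char:
  fixes b :: "real \<Rightarrow> real^'n"
  assumes cont: "continuous_on {0..} b" and fD: "frontier D \<noteq> {}" and t: "0 \<le> t"
  shows "Inf (ennreal ` {u. 0 \<le> u \<and> x0 + b u \<in> frontier D}) \<le> ennreal t \<longleftrightarrow>
         (\<exists>u\<in>{0..t}. 0 \<le> - infdist (x0 + b u) (frontier D))"
proof -
  let ?E = "{u. 0 \<le> u \<and> x0 + b u \<in> frontier D}"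
  have "Inf (ennreal ` ?E) \<le> ennreal t \<longleftrightarrow> (\<exists>u\<in>?E. u \<le> t)"
    using t by (intro inf_ennreal_le hit_closed2 hitset_closed[OF cont]) auto
  also have "\<dots> \<longleftrightarrow> (\<exists>u\<in>{0..t}. 0 \<le> - infdist (x0 + b u) (frontier D))"
  proof -
    have "x0 + b u \<in> frontier D \<longleftrightarrow> 0 \<le> - infdist (x0 + b u) (frontier D)" for u
      using in_closed_iff_infdist_zero[OF frontier_closed fD] infdist_nonneg[of "x0 + b u" "frontier D"]
      by auto
    then show ?thesis by auto
  qed
  finally show ?thesis .
qed

lemma step_exists:
  fixes b :: "real \<Rightarrow> real^'n"
  assumes cont: "continuous_on {0..} b" and s: "0 \<le> s" "s \<le> e" and e: "x0 + b e \<in> frontier D"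
    and w: "norm w \<le> 1" and eps: "0 < \<epsilon>"
  defines "r \<equiv> min \<epsilon> (infdist (x0 + b s) (frontier D)) * norm w"
  shows "\<exists>s'. s \<le> s' \<and> s' \<le> e \<and> Inf (ennreal ` {u. s \<le> u \<and> norm (b u - b s) = r}) = ennreal s'
          \<and> norm (b s' - b s) = r"
proof -
  let ?H = "{u. s \<le> u \<and> norm (b u - b s) = r}"
  let ?d = "infdist (x0 + b s) (frontier D)"
  have d0: "0 \<le> ?d" by (rule infdist_nonneg)
  have r0: "0 \<le> r" unfolding r_def using d0 eps by simp
  have rd: "r \<le> ?d"
  proof -
    have "r \<le> min \<epsilon> ?d * 1" unfolding r_def using w d0 eps by (intro mult_left_mono) auto
    also have "\<dots> \<le> ?d" by simp
    finally show ?thesis .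
  qed
  have de: "?d \<le> norm (b e - b s)"
    using infdist_le[OF e, of "x0 + b s"] by (simp add: dist_norm norm_minus_commute)
  have c: "continuous_on {s..e} (\<lambda>v. norm (b v - b s))"
    by (intro continuous_intros continuous_on_subset[OF cont]) (use s in auto)
  obtain v where v: "s \<le> v" "v \<le> e" "norm (b v - b s) = r"
    using IVT'[of "\<lambda>v. norm (b v - b s)" s r e] c s r0 rd de by auto
  have ne: "?H \<noteq> {}" using v by auto
  have cl: "closed ?H" by (rule hit_closed2[OF cont s(1)])
  note m = closed_min_ex[OF cl ne]
  have "\<And>u. u \<in> ?H \<Longrightarrow> 0 \<le> u" using s by auto
  note m = closed_min_ex[OF cl ne this]
  have "Inf (ennreal ` ?H) = ennreal (Inf ?H)"
    by (rule inf_ennreal_min) (use m in auto)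
  moreover have "Inf ?H \<le> v" using m v by auto
  ultimately show ?thesis using m v by (intro exI[of _ "Inf ?H"]) auto
qed


lemma tau_exit_eq:
  "tau_exit D x0 B (\<omega>, ws) = Inf (ennreal ` {u. 0 \<le> u \<and> x0 + B u \<omega> \<in> frontier D})"
proof -
  have "{ennreal t |t. P t} = ennreal ` {t. P t}" for P by auto
  then show ?thesis unfolding tau_exit_def by simp
qed

lemma tau_Suc_eq:
  "tau_seq D x0 \<epsilon> B (Suc k) (\<omega>, ws) =
    (if tau_seq D x0 \<epsilon> B k (\<omega>, ws) = \<infinity> then \<infinity>
     else Inf (ennreal ` {u. enn2real (tau_seq D x0 \<epsilon> B k (\<omega>, ws)) \<le> u \<and>
        norm (B u \<omega> - B (enn2real (tau_seq D x0 \<epsilon> B k (\<omega>, ws))) \<omega>) =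
        min \<epsilon> (infdist (x0 + B (enn2real (tau_seq D x0 \<epsilon> B k (\<omega>, ws))) \<omega>) (frontier D)) * norm (ws k)}))"
proof -
  have "{ennreal t |t. P t} = ennreal ` {t. P t}" for P by auto
  then show ?thesis by (simp add: Let_def)
qed

lemma tau_invariant:
  fixes B :: "real \<Rightarrow> 'a \<Rightarrow> real^'n"
  assumes cont: "continuous_on {0..} (\<lambda>t. B t \<omega>)" and e: "0 \<le> e" "x0 + B e \<omega> \<in> frontier D"
    and w: "\<And>k. norm (ws k) \<le> 1" and eps: "0 < \<epsilon>"
  shows "tau_seq D x0 \<epsilon> B k (\<omega>, ws) = ennreal (enn2real (tau_seq D x0 \<epsilon> B k (\<omega>, ws)))
       \<and> 0 \<le> enn2real (tau_seq D x0 \<epsilon> B k (\<omega>, ws)) \<and> enn2real (tau_seq D x0 \<epsilon> B k (\<omega>, ws)) \<le> e"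
proof (induction k)
  case 0 then show ?case using e by simp
next
  case (Suc k)
  define s where "s = enn2real (tau_seq D x0 \<epsilon> B k (\<omega>, ws))"
  have ts: "tau_seq D x0 \<epsilon> B k (\<omega>, ws) = ennreal s" "0 \<le> s" "s \<le> e" using Suc by (simp_all add: s_def)
  obtain s' where s': "s \<le> s'" "s' \<le> e"
    "Inf (ennreal ` {u. s \<le> u \<and> norm (B u \<omega> - B s \<omega>) = min \<epsilon> (infdist (x0 + B s \<omega>) (frontier D)) * norm (ws k)}) = ennreal s'"
    using step_exists[of "\<lambda>t. B t \<omega>", OF cont ts(2) ts(3) e(2) w eps] by blast
  have "tau_seq D x0 \<epsilon> B (Suc k) (\<omega>, ws) = ennreal s'"
    using s'(3) by (simp only: tau_Suc_eq ts(1) enn2real_ennreal[OF ts(2)]) simp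
  then show ?case using s' ts by simp
qed

lemma tau_step_rel:
  fixes B :: "real \<Rightarrow> 'a \<Rightarrow> real^'n"
  assumes cont: "continuous_on {0..} (\<lambda>t. B t \<omega>)" and e: "0 \<le> e" "x0 + B e \<omega> \<in> frontier D"
    and w: "\<And>k. norm (ws k) \<le> 1" and eps: "0 < \<epsilon>"
  defines "sq \<equiv> \<lambda>k. enn2real (tau_seq D x0 \<epsilon> B k (\<omega>, ws))"
  shows "sq k \<le> sq (Suc k) \<and>
    norm (B (sq (Suc k)) \<omega> - B (sq k) \<omega>) = min \<epsilon> (infdist (x0 + B (sq k) \<omega>) (frontier D)) * norm (ws k)"
proof -
  note inv = tau_invariant[where B=B and \<omega>=\<omega>, OF cont e w eps]
  define s where "s = sq k"
  have ts: "tau_seq D x0 \<epsilon> B k (\<omega>, ws) = ennreal s" "0 \<le> s" "s \<le> e" using inv[of k] by (simp_all add: s_def sq_def)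
  obtain s' where s': "s \<le> s'" "s' \<le> e"
    "Inf (ennreal ` {u. s \<le> u \<and> norm (B u \<omega> - B s \<omega>) = min \<epsilon> (infdist (x0 + B s \<omega>) (frontier D)) * norm (ws k)}) = ennreal s'"
    "norm (B s' \<omega> - B s \<omega>) = min \<epsilon> (infdist (x0 + B s \<omega>) (frontier D)) * norm (ws k)"
    using step_exists[of "\<lambda>t. B t \<omega>", OF cont ts(2) ts(3) e(2) w eps] by blast
  have "tau_seq D x0 \<epsilon> B (Suc k) (\<omega>, ws) = ennreal s'"
    using s'(3) by (simp only: tau_Suc_eq ts(1) enn2real_ennreal[OF ts(2)]) simp
  then have "sq (Suc k) = s'" using s' ts by (simp add: sq_def)
  then show ?thesis using s' ts by (simp add: s_def)
qed


lemma conv_abstract: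
  fixes b :: "real \<Rightarrow> real^'n" and sq :: "nat \<Rightarrow> real" and ws :: "nat \<Rightarrow> real^'n"
  assumes cont: "continuous_on {0..} b" and D: "open D" and fD: "frontier D \<noteq> {}"
    and sq0: "\<And>k. 0 \<le> sq k" and sqe: "\<And>k. sq k \<le> e" and mono: "\<And>k. sq k \<le> sq (Suc k)"
    and inD: "\<And>s. 0 \<le> s \<Longrightarrow> s < e \<Longrightarrow> x0 + b s \<in> D"
    and rel: "\<And>k. norm (b (sq (Suc k)) - b (sq k)) = min \<epsilon> (infdist (x0 + b (sq k)) (frontier D)) * norm (ws k)"
    and eps: "0 < \<epsilon>" and io: "\<And>K. \<exists>k\<ge>K. 1/2 \<le> norm (ws k)"
  shows "sq \<longlonglongrightarrow> e"
proof -
  have inc: "incseq sq" using mono by (simp add: incseq_SucI)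
  have bdd: "bdd_above (range sq)" using sqe by (auto simp: bdd_above_def)
  define L where "L = Sup (range sq)"
  have lim: "sq \<longlonglongrightarrow> L" unfolding L_def by (rule LIMSEQ_incseq_SUP[OF bdd inc])
  have Le: "L \<le> e" unfolding L_def using sqe by (intro cSup_least) auto
  have "sq 0 \<le> L" unfolding L_def using bdd by (intro cSup_upper) auto
  then have L0: "0 \<le> L" using sq0[of 0] by linarith
  show ?thesis
  proof (cases "L = e")
    case True then show ?thesis using lim by simp
  next
    case False
    then have Lle: "L < e" using Le by simp
    have xD: "x0 + b L \<in> D" using inD L0 Lle by simp
    have "x0 + b L \<notin> frontier D" using xD D by (simp add: frontier_def interior_open)
    then have dpos: "infdist (x0 + b L) (frontier D) > 0"
      by (intro infdist_pos_not_in_closed frontier_closed fD)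
    define c where "c = min \<epsilon> (infdist (x0 + b L) (frontier D))"
    have c0: "0 < c" unfolding c_def using dpos eps by simp
    have blim: "(\<lambda>k. b (sq k)) \<longlonglongrightarrow> b L"
      by (rule continuous_on_tendsto_compose[OF cont lim]) (use L0 sq0 in auto)
    have mlim: "(\<lambda>k. min \<epsilon> (infdist (x0 + b (sq k)) (frontier D))) \<longlonglongrightarrow> c"
      unfolding c_def by (intro tendsto_intros blim)
    have blim2: "(\<lambda>k. b (sq (Suc k))) \<longlonglongrightarrow> b L"
      using blim by (rule LIMSEQ_Suc)
    have ilim: "(\<lambda>k. norm (b (sq (Suc k)) - b (sq k))) \<longlonglongrightarrow> norm (b L - b L)"
      by (intro tendsto_intros blim blim2)
    have ev1: "eventually (\<lambda>k. c/2 < min \<epsilon> (infdist (x0 + b (sq k)) (frontier D))) sequentially"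
      using order_tendstoD(1)[OF mlim, of "c/2"] c0 by linarith
    have ev2: "eventually (\<lambda>k. norm (b (sq (Suc k)) - b (sq k)) < c/4) sequentially"
      using order_tendstoD(2)[OF ilim, of "c/4"] c0 by simp
    obtain K where K: "\<And>k. k \<ge> K \<Longrightarrow> c/2 < min \<epsilon> (infdist (x0 + b (sq k)) (frontier D)) \<and>
                                     norm (b (sq (Suc k)) - b (sq k)) < c/4"
      using eventually_conj[OF ev1 ev2] unfolding eventually_sequentially by blast
    obtain k where k: "k \<ge> K" "1/2 \<le> norm (ws k)" using io by blast
    have "c/2 * (1/2) \<le> min \<epsilon> (infdist (x0 + b (sq k)) (frontier D)) * norm (ws k)"
    proof (rule mult_mono)
      show "c/2 \<le> min \<epsilon> (infdist (x0 + b (sq k)) (frontier D))" using K[OF k(1)] by linarith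
      show "1/2 \<le> norm (ws k)" by (rule k(2))
      show "0 \<le> min \<epsilon> (infdist (x0 + b (sq k)) (frontier D))" using K[OF k(1)] c0 by linarith
      show "0 \<le> (1::real)/2" by simp
    qed
    then have "c/4 \<le> norm (b (sq (Suc k)) - b (sq k))" using rel[of k] by simp
    then show ?thesis using K[OF k(1)] by linarith
  qed
qed


lemma comp_meas:
  fixes Z :: "real \<Rightarrow> 'b \<Rightarrow> real^'n" and N :: "'b measure"
  assumes t: "0 \<le> t"
    and Zm: "\<And>u. 0 \<le> u \<Longrightarrow> u \<le> t \<Longrightarrow> Z u \<in> borel_measurable N"
    and Zc: "\<And>x. x \<in> space N \<Longrightarrow> continuous_on {0..t} (\<lambda>u. Z u x)"
    and gm: "g \<in> borel_measurable N"
    and gb: "\<And>x. x \<in> space N \<Longrightarrow> 0 \<le> g x \<and> g x \<le> t"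
  shows "(\<lambda>x. Z (g x) x) \<in> borel_measurable N"
proof (rule borel_measurable_LIMSEQ_metric)
  define gn where "gn n x = min t (real (nat \<lceil>2^n * g x\<rceil>) / 2^n)" for n x
  fix n :: nat
  have cm: "(\<lambda>x. nat \<lceil>2^n * g x\<rceil>) \<in> measurable N (count_space UNIV)"
    using gm by measurable
  have fm: "(\<lambda>x. Z (min t (real j / 2^n)) x) \<in> borel_measurable N" for j :: nat
    using t by (intro Zm) auto
  show "(\<lambda>x. Z (gn n x) x) \<in> borel_measurable N"
    unfolding gn_def using measurable_compose_countable[OF fm cm] by simp
next
  define gn where "gn n x = min t (real (nat \<lceil>2^n * g x\<rceil>) / 2^n)" for n x
  fix x assume x: "x \<in> space N"
  have bnd: "g x \<le> gn n x \<and> gn n x \<le> g x + (1/2)^n" for n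
  proof -
    have p: "(0::real) < 2^n" by simp
    have gx: "0 \<le> g x" "g x \<le> t" using gb[OF x] by auto
    have "0 \<le> 2^n * g x" using gx by simp
    then have e: "real (nat \<lceil>2^n * g x\<rceil>) = of_int \<lceil>2^n * g x\<rceil>" by simp
    have l: "2^n * g x \<le> of_int \<lceil>2^n * g x\<rceil>" by (rule le_of_int_ceiling)
    have u: "of_int \<lceil>2^n * g x\<rceil> \<le> 2^n * g x + 1" by (rule of_int_ceiling_le_add_one)
    have "g x \<le> real (nat \<lceil>2^n * g x\<rceil>) / 2^n" using l p e by (simp add: field_simps)
    moreover have "real (nat \<lceil>2^n * g x\<rceil>) / 2^n \<le> g x + (1/2)^n"
      using u p e by (simp add: field_simps)
    ultimately show ?thesis unfolding gn_def using gx by auto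
  qed
  have glim: "(\<lambda>n. gn n x) \<longlonglongrightarrow> g x"
  proof (rule tendsto_sandwich[of "\<lambda>n. g x" _ _ "\<lambda>n. g x + (1/2)^n"])
    show "\<forall>\<^sub>F n in sequentially. g x \<le> gn n x" using bnd by simp
    show "\<forall>\<^sub>F n in sequentially. gn n x \<le> g x + (1/2)^n" using bnd by simp
    show "(\<lambda>n. g x) \<longlonglongrightarrow> g x" by simp
    have "(\<lambda>n. g x + (1/2::real)^n) \<longlonglongrightarrow> g x + 0"
      by (intro tendsto_add tendsto_const LIMSEQ_power_zero) simp
    then show "(\<lambda>n. g x + (1/2::real)^n) \<longlonglongrightarrow> g x" by simp
  qed
  have inr: "gn n x \<in> {0..t}" for n using bnd[of n] gb[OF x] unfolding gn_def by auto
  show "(\<lambda>n. Z (gn n x) x) \<longlonglongrightarrow> Z (g x) x"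
    by (rule continuous_on_tendsto_compose[OF Zc[OF x] glim]) (use gb[OF x] inr in auto)
qed


lemma sets_pair_mono:
  assumes "space A1 = space A2" "sets A1 \<subseteq> sets A2"
  shows "sets (A1 \<Otimes>\<^sub>M C) \<subseteq> sets (A2 \<Otimes>\<^sub>M C)"
  unfolding sets_pair_measure assms(1)
  by (rule sigma_sets_mono') (use assms(2) in blast)

lemma barF_space:
  assumes bm: "brownian_motion M F B" and t: "0 \<le> t"
  shows "space (bar_filtration F t) = space (bar_space M)"
  unfolding bar_filtration_def bar_space_def by (simp add: space_pair_measure bm_space[OF bm t])

lemma barF_mono:
  assumes bm: "brownian_motion M F B" and "0 \<le> s" "s \<le> t"
  shows "sets (bar_filtration F s) \<subseteq> sets (bar_filtration F t)"
  unfolding bar_filtration_def using assms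
  by (intro sets_pair_mono) (auto simp: bm_space[OF bm] bm_mono[OF bm])

lemma barF_sub:
  assumes bm: "brownian_motion M F B" and "0 \<le> t"
  shows "sets (bar_filtration F t) \<subseteq> sets (bar_space M)"
  unfolding bar_filtration_def bar_space_def using assms
  by (intro sets_pair_mono) (auto simp: bm_space[OF bm] bm_sets[OF bm])

lemma barF_subalg:
  assumes bm: "brownian_motion M F B" and "0 \<le> t"
  shows "subalgebra (bar_space M) (bar_filtration F t)"
  unfolding subalgebra_def using barF_sub[OF assms] barF_space[OF assms] by simp

lemma barF_B_meas:
  fixes B :: "real \<Rightarrow> 'a \<Rightarrow> real^'n"
  assumes bm: "brownian_motion M F B" and "0 \<le> u" "u \<le> t"
  shows "(\<lambda>p. B u (fst p)) \<in> borel_measurable (bar_filtration F t :: ('a \<times> (nat \<Rightarrow> real^'n)) measure)"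
  unfolding bar_filtration_def
  by (rule measurable_compose[OF measurable_fst bm_measF[OF assms]])

lemma barF_w_meas:
  "(\<lambda>p. norm (snd p k)) \<in> borel_measurable (bar_filtration F t :: ('a \<times> (nat \<Rightarrow> real^'n)) measure)"
  unfolding bar_filtration_def
  by (rule measurable_compose[OF measurable_snd W_norm_meas])

lemma infdist_meas[measurable]: "(\<lambda>x. infdist x A) \<in> borel_measurable borel"
  by (intro borel_measurable_continuous_onI continuous_intros)

lemma barF_space_mem:
  assumes bm: "brownian_motion M F B" and "0 \<le> t" and "p \<in> space (bar_filtration F t)"
  shows "fst p \<in> space M" "\<And>k. snd p k \<in> ball 0 1"
proof -
  have "p \<in> space M \<times> {ws. \<forall>k. ws k \<in> ball 0 1}"
  proof -
    have e: "space (bar_filtration F t) = space M \<times> {ws. \<forall>k. ws k \<in> ball (0::real^'n) 1}"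
      using barF_space[OF bm assms(2)] unfolding bar_space_def by (simp add: space_pair_measure W_space)
    show ?thesis using assms(3) unfolding e .
  qed
  then show "fst p \<in> space M" "\<And>k. snd p k \<in> ball 0 1" by auto
qed


lemma exit_sets:
  fixes B :: "real \<Rightarrow> 'a \<Rightarrow> real^'n"
  assumes bm: "brownian_motion M F B" and fD: "frontier D \<noteq> {}" and t: "0 \<le> t"
  shows "{p\<in>space (bar_space M :: ('a \<times> (nat \<Rightarrow> real^'n)) measure). tau_exit D x0 B p \<le> ennreal t}
           \<in> sets (bar_filtration F t)"
proof -
  let ?N = "bar_filtration F t :: ('a \<times> (nat \<Rightarrow> real^'n)) measure"
  have sp: "space ?N = space (bar_space M)" by (rule barF_space[OF bm t])
  have eq: "{p\<in>space (bar_space M :: ('a \<times> (nat \<Rightarrow> real^'n)) measure). tau_exit D x0 B p \<le> ennreal t} =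
    {p\<in>space ?N. \<forall>m::nat. \<exists>q\<in>Qt t. 0 \<le> q \<and> q \<le> t \<and> -1/(real m+1) < - infdist (x0 + B q (fst p)) (frontier D)}"
  proof (rule set_eqI)
    fix p :: "'a \<times> (nat \<Rightarrow> real^'n)"
    obtain \<omega> ws where p: "p = (\<omega>, ws)" by (cases p)
    show "p \<in> {p\<in>space (bar_space M). tau_exit D x0 B p \<le> ennreal t} \<longleftrightarrow>
      p \<in> {p\<in>space ?N. \<forall>m::nat. \<exists>q\<in>Qt t. 0 \<le> q \<and> q \<le> t \<and> -1/(real m+1) < - infdist (x0 + B q (fst p)) (frontier D)}"
    proof (cases "p \<in> space ?N")
      case False then show ?thesis using sp by simp
    next
      case True
      have om: "\<omega> \<in> space M" using barF_space_mem(1)[OF bm t True] p by simp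
      have cont: "continuous_on {0..} (\<lambda>u. B u \<omega>)" by (rule bm_cont[OF bm om])
      have c2: "continuous_on {0..t} (\<lambda>u. - infdist (x0 + B u \<omega>) (frontier D))"
        by (intro continuous_intros continuous_on_subset[OF cont]) auto
      have "tau_exit D x0 B p \<le> ennreal t \<longleftrightarrow> (\<exists>u\<in>{0..t}. 0 \<le> - infdist (x0 + B u \<omega>) (frontier D))"
        unfolding p tau_exit_eq by (rule exit_char[OF cont fD t])
      also have "\<dots> \<longleftrightarrow> (\<forall>m::nat. \<exists>q\<in>Qt t. 0 \<le> q \<and> q \<le> t \<and> -1/(real m+1) < - infdist (x0 + B q \<omega>) (frontier D))"
        by (rule dense_char[OF c2 order_refl t])
      finally show ?thesis using True sp p by simp
    qed
  qed
  have "{p\<in>space ?N. \<forall>m::nat. \<exists>q\<in>Qt t. 0 \<le> q \<and> q \<le> t \<and> -1/(real m+1) < - infdist (x0 + B q (fst p)) (frontier D)}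
     \<in> sets ?N"
  proof (intro sets.sets_Collect_countable_All sets.sets_Collect_countable_Ex' countable_Qt)
    fix m :: nat and q assume q: "q \<in> Qt t"
    have qb: "0 \<le> q" "q \<le> t" using Qt_bounds[OF q t] by auto
    have [measurable]: "(\<lambda>p. B q (fst p)) \<in> borel_measurable ?N" by (rule barF_B_meas[OF bm qb])
    show "{p\<in>space ?N. 0 \<le> q \<and> q \<le> t \<and> -1/(real m+1) < - infdist (x0 + B q (fst p)) (frontier D)} \<in> sets ?N"
      by measurable
  qed
  then show ?thesis using eq by simp
qed


declare tau_seq.simps(2)[simp del]

lemma tau_step_sets:
  fixes B :: "real \<Rightarrow> 'a \<Rightarrow> real^'n"
  assumes bm: "brownian_motion M F B" and eps: "0 < \<epsilon>" and t: "0 \<le> t"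
    and IH: "\<And>a. 0 \<le> a \<Longrightarrow> {p\<in>space (bar_space M :: ('a \<times> (nat \<Rightarrow> real^'n)) measure).
                 tau_seq D x0 \<epsilon> B k p \<le> ennreal a} \<in> sets (bar_filtration F a)"
  shows "{p\<in>space (bar_space M :: ('a \<times> (nat \<Rightarrow> real^'n)) measure). tau_seq D x0 \<epsilon> B (Suc k) p \<le> ennreal t}
           \<in> sets (bar_filtration F t)"
proof -
  let ?N = "bar_filtration F t :: ('a \<times> (nat \<Rightarrow> real^'n)) measure"
  let ?P = "bar_space M :: ('a \<times> (nat \<Rightarrow> real^'n)) measure"
  define \<sigma> where "\<sigma> = tau_seq D x0 \<epsilon> B k"
  have sp: "space ?N = space ?P" by (rule barF_space[OF bm t])
  have S: "{p\<in>space ?N. \<sigma> p \<le> ennreal t} \<in> sets ?N" using IH[OF t] sp by (simp add: \<sigma>_def)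
  define \<sigma>t where "\<sigma>t p = (if \<sigma> p \<le> ennreal t then enn2real (\<sigma> p) else t)" for p
  have \<sigma>t_bnd: "0 \<le> \<sigma>t p \<and> \<sigma>t p \<le> t" for p
  proof (cases "\<sigma> p \<le> ennreal t")
    case True
    then have "enn2real (\<sigma> p) \<le> enn2real (ennreal t)" by (intro enn2real_mono) auto
    then show ?thesis using True t by (simp add: \<sigma>t_def)
  qed (use t in \<open>simp add: \<sigma>t_def\<close>)
  have \<sigma>t_meas: "\<sigma>t \<in> borel_measurable ?N"
  proof (rule borel_measurableI_le)
    fix y :: real
    show "{p\<in>space ?N. \<sigma>t p \<le> y} \<in> sets ?N"
    proof (cases "y < 0")
      case True
      have "\<not> \<sigma>t p \<le> y" for p using \<sigma>t_bnd[of p] True by linarith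
      then have e: "{p\<in>space ?N. \<sigma>t p \<le> y} = {}" by blast
      show ?thesis unfolding e by (rule sets.empty_sets)
    next
      case False
      then have y0: "0 \<le> y" by simp
      show ?thesis
      proof (cases "t \<le> y")
        case True
        have "\<sigma>t p \<le> y" for p using \<sigma>t_bnd[of p] True by linarith
        then have e: "{p\<in>space ?N. \<sigma>t p \<le> y} = space ?N" by blast
        show ?thesis unfolding e by (rule sets.top)
      next
        case False
        then have yt: "y < t" by simp
        have "\<sigma>t p \<le> y \<longleftrightarrow> \<sigma> p \<le> ennreal y" for p
        proof
          assume h: "\<sigma>t p \<le> y"
          show "\<sigma> p \<le> ennreal y"
          proof (cases "\<sigma> p \<le> ennreal t")
            case True
            then have fin: "\<sigma> p < top" using ennreal_less_top le_less_trans by blast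
            have "enn2real (\<sigma> p) \<le> y" using h True by (simp add: \<sigma>t_def)
            then have "ennreal (enn2real (\<sigma> p)) \<le> ennreal y" by (rule ennreal_leI)
            then show ?thesis using fin by simp
          next
            case False then show ?thesis using h yt by (simp add: \<sigma>t_def)
          qed
        next
          assume h: "\<sigma> p \<le> ennreal y"
          have "\<sigma> p \<le> ennreal t" using h yt by (meson ennreal_leI less_imp_le order_trans)
          moreover have "enn2real (\<sigma> p) \<le> enn2real (ennreal y)" using h by (intro enn2real_mono) auto
          ultimately show "\<sigma>t p \<le> y" using y0 by (simp add: \<sigma>t_def)
        qed
        then have "{p\<in>space ?N. \<sigma>t p \<le> y} = {p\<in>space ?P. \<sigma> p \<le> ennreal y}" using sp by auto
        also have "\<dots> \<in> sets (bar_filtration F y)" unfolding \<sigma>_def by (rule IH[OF y0])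
        also have "\<dots> \<subseteq> sets ?N" by (rule barF_mono[OF bm y0]) (use yt in simp)
        finally show ?thesis .
      qed
    qed
  qed
  define B\<sigma> where "B\<sigma> p = B (\<sigma>t p) (fst p)" for p
  have B\<sigma>_meas: "B\<sigma> \<in> borel_measurable ?N"
    unfolding B\<sigma>_def
  proof (rule comp_meas[OF t _ _ \<sigma>t_meas])
    show "(\<lambda>p. B u (fst p)) \<in> borel_measurable ?N" if "0 \<le> u" "u \<le> t" for u
      by (rule barF_B_meas[OF bm that])
    show "continuous_on {0..t} (\<lambda>u. B u (fst p))" if "p \<in> space ?N" for p
      using bm_cont[OF bm barF_space_mem(1)[OF bm t that]] by (rule continuous_on_subset) auto
    show "0 \<le> \<sigma>t p \<and> \<sigma>t p \<le> t" for p by (rule \<sigma>t_bnd)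
  qed
  define R where "R p = min \<epsilon> (infdist (x0 + B\<sigma> p) (frontier D)) * norm (snd p k)" for p
  have [measurable]: "(\<lambda>p. norm (snd p k)) \<in> borel_measurable ?N" by (rule barF_w_meas)
  have [measurable]: "B\<sigma> \<in> borel_measurable ?N" by (rule B\<sigma>_meas)
  have [measurable]: "\<sigma>t \<in> borel_measurable ?N" by (rule \<sigma>t_meas)
  have R_meas[measurable]: "R \<in> borel_measurable ?N" unfolding R_def by measurable
  define T where "T = {p\<in>space ?N. \<sigma> p \<le> ennreal t \<and>
     (\<forall>m::nat. \<exists>q\<in>Qt t. \<sigma>t p \<le> q \<and> q \<le> t \<and> -1/(real m+1) < norm (B q (fst p) - B\<sigma> p) - R p)}"
  have Tm: "T \<in> sets ?N"
  proof -
    have "{p\<in>space ?N. \<forall>m::nat. \<exists>q\<in>Qt t. \<sigma>t p \<le> q \<and> q \<le> t \<and> -1/(real m+1) < norm (B q (fst p) - B\<sigma> p) - R p}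
       \<in> sets ?N"
    proof (intro sets.sets_Collect_countable_All sets.sets_Collect_countable_Ex' countable_Qt)
      fix m :: nat and q assume q: "q \<in> Qt t"
      have qb: "0 \<le> q" "q \<le> t" using Qt_bounds[OF q t] by auto
      have [measurable]: "(\<lambda>p. B q (fst p)) \<in> borel_measurable ?N" by (rule barF_B_meas[OF bm qb])
      show "{p\<in>space ?N. \<sigma>t p \<le> q \<and> q \<le> t \<and> -1/(real m+1) < norm (B q (fst p) - B\<sigma> p) - R p} \<in> sets ?N"
        by measurable
    qed
    then show ?thesis unfolding T_def using S by (intro sets.sets_Collect_conj) auto
  qed
  have eq: "{p\<in>space ?P. tau_seq D x0 \<epsilon> B (Suc k) p \<le> ennreal t} = T"
  proof (rule set_eqI)
    fix p :: "'a \<times> (nat \<Rightarrow> real^'n)"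
    obtain \<omega> ws where p: "p = (\<omega>, ws)" by (cases p)
    show "p \<in> {p\<in>space ?P. tau_seq D x0 \<epsilon> B (Suc k) p \<le> ennreal t} \<longleftrightarrow> p \<in> T"
    proof (cases "p \<in> space ?N")
      case False then show ?thesis using sp by (simp add: T_def)
    next
      case True
      have om: "\<omega> \<in> space M" using barF_space_mem(1)[OF bm t True] p by simp
      have cont: "continuous_on {0..} (\<lambda>u. B u \<omega>)" by (rule bm_cont[OF bm om])
      show ?thesis
      proof (cases "\<sigma> p = \<infinity>")
        case True
        then have "tau_seq D x0 \<epsilon> B (Suc k) p = \<infinity>" unfolding p by (subst tau_Suc_eq) (simp add: \<sigma>_def p)
        then show ?thesis using True by (simp add: T_def top_unique)
      next
        case False
        define s where "s = enn2real (\<sigma> p)"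
        have s0: "0 \<le> s" by (simp add: s_def)
        have \<sigma>s: "\<sigma> p = ennreal s" using False by (simp add: s_def less_top)
        define r where "r = min \<epsilon> (infdist (x0 + B s \<omega>) (frontier D)) * norm (ws k)"
        have r0: "0 \<le> r" unfolding r_def using eps infdist_nonneg[of "x0 + B s \<omega>" "frontier D"] by simp
        have tS: "tau_seq D x0 \<epsilon> B (Suc k) p = Inf (ennreal ` {u. s \<le> u \<and> norm (B u \<omega> - B s \<omega>) = r})"
          using False unfolding p r_def s_def \<sigma>_def by (subst tau_Suc_eq) (simp add: p)
        have "tau_seq D x0 \<epsilon> B (Suc k) p \<le> ennreal t \<longleftrightarrow> (s \<le> t \<and> (\<exists>u\<in>{s..t}. 0 \<le> norm (B u \<omega> - B s \<omega>) - r))"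
          unfolding tS by (rule hit_char[OF cont s0 r0 t])
        also have "\<dots> \<longleftrightarrow> p \<in> T"
        proof (cases "s \<le> t")
          case False
          then have "\<not> \<sigma> p \<le> ennreal t" using \<sigma>s s0 t by simp
          then show ?thesis using False by (simp add: T_def)
        next
          case st: True
          have le: "\<sigma> p \<le> ennreal t" using \<sigma>s st by (simp add: ennreal_leI)
          have \<sigma>tp: "\<sigma>t p = s" using le by (simp add: \<sigma>t_def s_def)
          have B\<sigma>p: "B\<sigma> p = B s \<omega>" unfolding B\<sigma>_def \<sigma>tp by (simp add: p)
          have Rp: "R p = r" unfolding R_def B\<sigma>p by (simp add: r_def p)
          have c2: "continuous_on {s..t} (\<lambda>u. norm (B u \<omega> - B s \<omega>) - r)"
            by (intro continuous_intros continuous_on_subset[OF cont]) (use s0 in auto)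
          have "(\<exists>u\<in>{s..t}. 0 \<le> norm (B u \<omega> - B s \<omega>) - r) \<longleftrightarrow>
                (\<forall>m::nat. \<exists>q\<in>Qt t. s \<le> q \<and> q \<le> t \<and> -1/(real m+1) < norm (B q \<omega> - B s \<omega>) - r)"
            by (rule dense_char[OF c2 s0 st])
          then show ?thesis using True st le \<sigma>tp B\<sigma>p Rp by (simp add: T_def p)
        qed
        finally show ?thesis using True sp by simp
      qed
    qed
  qed
  show ?thesis using eq Tm by simp
qed


lemma stopping_from_sets:
  fixes T :: "'a \<times> (nat \<Rightarrow> real^'n) \<Rightarrow> ennreal"
  assumes bm: "brownian_motion M F B"
    and S: "\<And>t. 0 \<le> t \<Longrightarrow> {x\<in>space (bar_space M). T x \<le> ennreal t} \<in> sets (bar_filtration F t)"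
    and N: "N \<in> null_sets (bar_space M)" and sub: "{x\<in>space (bar_space M). T x = \<infinity>} \<subseteq> N"
  shows "is_stopping_time (bar_space M) (bar_filtration F) T"
proof -
  let ?P = "bar_space M :: ('a \<times> (nat \<Rightarrow> real^'n)) measure"
  have Tm: "T \<in> borel_measurable ?P"
  proof (rule borel_measurableI_le)
    fix y :: ennreal
    show "{x\<in>space ?P. T x \<le> y} \<in> sets ?P"
    proof (cases y)
      case (real r)
      have "{x\<in>space ?P. T x \<le> y} \<in> sets (bar_filtration F r)" using S[OF real(1)] real(2) by simp
      also have "\<dots> \<subseteq> sets ?P" by (rule barF_sub[OF bm real(1)])
      finally show ?thesis .
    next
      case top
      then have e: "{x\<in>space ?P. T x \<le> y} = space ?P" by auto
      show ?thesis unfolding e by (rule sets.top)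
    qed
  qed
  have inf_m: "{x\<in>space ?P. T x = \<infinity>} \<in> sets ?P" using Tm by measurable
  have "emeasure ?P {x\<in>space ?P. T x = \<infinity>} \<le> emeasure ?P N"
    using N sub by (intro emeasure_mono) auto
  then have "emeasure ?P {x\<in>space ?P. T x = \<infinity>} = 0" using N by auto
  then show ?thesis unfolding is_stopping_time_def using Tm S by blast
qed

lemma tau_sets:
  fixes B :: "real \<Rightarrow> 'a \<Rightarrow> real^'n"
  assumes bm: "brownian_motion M F B" and eps: "0 < \<epsilon>" and t: "0 \<le> t"
  shows "{p\<in>space (bar_space M :: ('a \<times> (nat \<Rightarrow> real^'n)) measure). tau_seq D x0 \<epsilon> B k p \<le> ennreal t}
           \<in> sets (bar_filtration F t)"
  using t
proof (induction k arbitrary: t)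
  case 0
  have e: "{p\<in>space (bar_space M :: ('a \<times> (nat \<Rightarrow> real^'n)) measure). tau_seq D x0 \<epsilon> B 0 p \<le> ennreal t}
     = space (bar_filtration F t)"
  proof -
    have "space (bar_filtration F t :: ('a \<times> (nat \<Rightarrow> real^'n)) measure) = space (bar_space M)"
      by (rule barF_space[OF bm 0])
    then show ?thesis by simp
  qed
  show ?case unfolding e by (rule sets.top)
next
  case (Suc k)
  show ?case by (rule tau_step_sets[OF bm eps Suc.prems Suc.IH])
qed


declare tau_seq.simps(2)[simp del]

theorem lemma2p24:
  fixes M :: "'a measure" and F :: "real \<Rightarrow> 'a measure"
    and B :: "real \<Rightarrow> 'a \<Rightarrow> real^'n"
    and D :: "(real^'n) set" and x0 :: "real^'n" and \<epsilon> :: real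
  assumes "brownian_motion M F B"
    and "open D" and "bounded D" and "connected D" and "x0 \<in> D"
    and "0 < \<epsilon>" and "\<epsilon> < 1"
  shows "(\<forall>k. is_stopping_time (bar_space M) (bar_filtration F) (tau_seq D x0 \<epsilon> B k))
       \<and> is_stopping_time (bar_space M) (bar_filtration F) (tau_exit D x0 B)
       \<and> (AE p in bar_space M. (\<lambda>k. tau_seq D x0 \<epsilon> B k p) \<longlonglongrightarrow> tau_exit D x0 B p)"
proof -
  note bm = assms(1)
  have Dopen: "open D" and Dbd: "bounded D" and x0D: "x0 \<in> D" and eps: "0 < \<epsilon>" using assms by auto
  let ?P = "bar_space M :: ('a \<times> (nat \<Rightarrow> real^'n)) measure"
  let ?W = "ball_seq_space :: (nat \<Rightarrow> real^'n) measure"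
  interpret Mp: prob_space M by (rule bm_prob[OF bm])
  interpret Wp: prob_space ?W by (rule W_prob)
  have fD: "frontier D \<noteq> {}"
  proof (rule frontier_not_empty)
    show "D \<noteq> {}" using x0D by auto
    show "D \<noteq> UNIV" using Dbd by auto
  qed
  obtain bb where bb: "bb > 0" "\<And>x. x \<in> D \<Longrightarrow> norm x \<le> bb" using Dbd by (auto simp: bounded_pos)
  define G where "G = {\<omega>\<in>space M. \<forall>j::nat. norm (B (real j + 1) \<omega> - B (real j) \<omega>) \<le> 2 * bb}"
  have Gnull: "G \<in> null_sets M" unfolding G_def by (rule bm_incr_null[OF bm]) (use bb in simp)
  define NG where "NG = G \<times> space ?W"
  have NGnull: "NG \<in> null_sets ?P"
  proof -
    have "G \<in> sets M" "emeasure M G = 0" using Gnull by auto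
    moreover have "NG \<in> sets ?P" unfolding NG_def bar_space_def using \<open>G \<in> sets M\<close> by auto
    moreover have "emeasure ?P NG = emeasure M G * emeasure ?W (space ?W)"
      unfolding NG_def bar_space_def using \<open>G \<in> sets M\<close>
      by (intro Wp.emeasure_pair_measure_Times) auto
    ultimately show ?thesis by (intro null_setsI) simp_all
  qed
  define E where "E \<omega> = {u. 0 \<le> u \<and> x0 + B u \<omega> \<in> frontier D}" for \<omega>
  have E_ne: "E \<omega> \<noteq> {}" if om: "\<omega> \<in> space M" "\<omega> \<notin> G" for \<omega>
  proof
    assume e: "E \<omega> = {}"
    have cont: "continuous_on {0..} (\<lambda>u. B u \<omega>)" by (rule bm_cont[OF bm om(1)])
    have x00: "x0 + B 0 \<omega> \<in> D" using bm_zero[OF bm om(1)] x0D by simp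
    have inD: "x0 + B u \<omega> \<in> D" if "0 \<le> u" for u
      by (rule in_D_before[of "\<lambda>u. B u \<omega>", OF cont x00 that]) (use e in \<open>auto simp: E_def\<close>)
    have "norm (B (real j + 1) \<omega> - B (real j) \<omega>) \<le> 2 * bb" for j :: nat
    proof -
      have "norm (B (real j + 1) \<omega> - B (real j) \<omega>) = norm ((x0 + B (real j + 1) \<omega>) - (x0 + B (real j) \<omega>))"
        by simp
      also have "\<dots> \<le> norm (x0 + B (real j + 1) \<omega>) + norm (x0 + B (real j) \<omega>)" by (rule norm_triangle_ineq4)
      also have "\<dots> \<le> bb + bb" using bb(2)[OF inD] by (intro add_mono) auto
      finally show ?thesis by simp
    qed
    then have "\<omega> \<in> G" using om by (simp add: G_def)
    then show False using om by simp
  qed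
  have E_props: "Inf (E \<omega>) \<in> E \<omega> \<and> (\<forall>u\<in>E \<omega>. Inf (E \<omega>) \<le> u) \<and> tau_exit D x0 B (\<omega>, ws) = ennreal (Inf (E \<omega>))"
    if om: "\<omega> \<in> space M" "\<omega> \<notin> G" for \<omega> ws
  proof -
    have cont: "continuous_on {0..} (\<lambda>u. B u \<omega>)" by (rule bm_cont[OF bm om(1)])
    have cl: "closed (E \<omega>)" unfolding E_def by (rule hitset_closed[OF cont])
    have nn: "\<And>u. u \<in> E \<omega> \<Longrightarrow> 0 \<le> u" by (auto simp: E_def)
    note m = closed_min_ex[OF cl E_ne[OF om] nn]
    have "tau_exit D x0 B (\<omega>, ws) = Inf (ennreal ` E \<omega>)" unfolding tau_exit_eq E_def ..
    also have "\<dots> = ennreal (Inf (E \<omega>))" by (rule inf_ennreal_closed[OF cl E_ne[OF om] nn])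
    finally show ?thesis using m by simp
  qed
  have Wsp: "ws \<in> space ?W \<Longrightarrow> norm (ws k) \<le> 1" for ws k
    by (auto simp: W_space less_imp_le)
  have Psp: "p \<in> space ?P \<longleftrightarrow> fst p \<in> space M \<and> snd p \<in> space ?W" for p
    by (cases p) (auto simp: bar_space_def space_pair_measure)
  have tau_fin: "tau_seq D x0 \<epsilon> B k (\<omega>, ws) = ennreal (enn2real (tau_seq D x0 \<epsilon> B k (\<omega>, ws)))
       \<and> 0 \<le> enn2real (tau_seq D x0 \<epsilon> B k (\<omega>, ws)) \<and> enn2real (tau_seq D x0 \<epsilon> B k (\<omega>, ws)) \<le> Inf (E \<omega>)"
    if om: "\<omega> \<in> space M" "\<omega> \<notin> G" and ws: "ws \<in> space ?W" for \<omega> ws k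
  proof -
    have cont: "continuous_on {0..} (\<lambda>u. B u \<omega>)" by (rule bm_cont[OF bm om(1)])
    have e: "0 \<le> Inf (E \<omega>)" "x0 + B (Inf (E \<omega>)) \<omega> \<in> frontier D" using E_props[OF om] by (auto simp: E_def)
    show ?thesis by (rule tau_invariant[where B=B and \<omega>=\<omega>, OF cont e Wsp[OF ws] eps])
  qed
  have st_k: "is_stopping_time ?P (bar_filtration F) (tau_seq D x0 \<epsilon> B k)" for k
  proof (rule stopping_from_sets[OF bm _ NGnull])
    show "{p\<in>space ?P. tau_seq D x0 \<epsilon> B k p \<le> ennreal t} \<in> sets (bar_filtration F t)" if "0 \<le> t" for t
      by (rule tau_sets[OF bm eps that])
    show "{p\<in>space ?P. tau_seq D x0 \<epsilon> B k p = \<infinity>} \<subseteq> NG"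
    proof
      fix p assume p: "p \<in> {p\<in>space ?P. tau_seq D x0 \<epsilon> B k p = \<infinity>}"
      obtain \<omega> ws where pp: "p = (\<omega>, ws)" by (cases p)
      have om: "\<omega> \<in> space M" and ws: "ws \<in> space ?W" using p pp Psp by auto
      show "p \<in> NG"
      proof (rule ccontr)
        assume "p \<notin> NG"
        then have "\<omega> \<notin> G" using ws pp by (auto simp: NG_def)
        then have "tau_seq D x0 \<epsilon> B k (\<omega>, ws) = ennreal (enn2real (tau_seq D x0 \<epsilon> B k (\<omega>, ws)))"
          using tau_fin[OF om _ ws, of k] by blast
        moreover have "\<And>x r. x = ennreal r \<Longrightarrow> x \<noteq> \<infinity>" by simp
        ultimately have "tau_seq D x0 \<epsilon> B k p \<noteq> \<infinity>" unfolding pp by blast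
        then show False using p by simp
      qed
    qed
  qed
  have st_e: "is_stopping_time ?P (bar_filtration F) (tau_exit D x0 B)"
  proof (rule stopping_from_sets[OF bm _ NGnull])
    show "{p\<in>space ?P. tau_exit D x0 B p \<le> ennreal t} \<in> sets (bar_filtration F t)" if "0 \<le> t" for t
      by (rule exit_sets[OF bm fD that])
    show "{p\<in>space ?P. tau_exit D x0 B p = \<infinity>} \<subseteq> NG"
    proof
      fix p assume p: "p \<in> {p\<in>space ?P. tau_exit D x0 B p = \<infinity>}"
      obtain \<omega> ws where pp: "p = (\<omega>, ws)" by (cases p)
      have om: "\<omega> \<in> space M" and ws: "ws \<in> space ?W" using p pp Psp by auto
      show "p \<in> NG"
      proof (rule ccontr)
        assume "p \<notin> NG"
        then have "\<omega> \<notin> G" using ws pp by (auto simp: NG_def)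
        then have "tau_exit D x0 B p \<noteq> \<infinity>" using E_props[OF om, of ws] pp by simp
        then show False using p by simp
      qed
    qed
  qed
  define NW where "NW = {ws\<in>space ?W. \<exists>K. \<forall>k\<ge>K. norm (ws k) < 1/2}"
  have NWnull: "NW \<in> null_sets ?W" unfolding NW_def by (rule W_null)
  define N2 where "N2 = space M \<times> NW"
  have N2null: "N2 \<in> null_sets ?P"
  proof -
    have "NW \<in> sets ?W" "emeasure ?W NW = 0" using NWnull by auto
    moreover have "N2 \<in> sets ?P" unfolding N2_def bar_space_def using \<open>NW \<in> sets ?W\<close> by auto
    moreover have "emeasure ?P N2 = emeasure M (space M) * emeasure ?W NW"
      unfolding N2_def bar_space_def using \<open>NW \<in> sets ?W\<close>
      by (intro Wp.emeasure_pair_measure_Times) auto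
    ultimately show ?thesis by (intro null_setsI) simp_all
  qed
  have ae: "AE p in ?P. (\<lambda>k. tau_seq D x0 \<epsilon> B k p) \<longlonglongrightarrow> tau_exit D x0 B p"
  proof (rule AE_I')
    show "NG \<union> N2 \<in> null_sets ?P" using NGnull N2null by auto
    show "{p\<in>space ?P. \<not> (\<lambda>k. tau_seq D x0 \<epsilon> B k p) \<longlonglongrightarrow> tau_exit D x0 B p} \<subseteq> NG \<union> N2"
    proof
      fix p assume p: "p \<in> {p\<in>space ?P. \<not> (\<lambda>k. tau_seq D x0 \<epsilon> B k p) \<longlonglongrightarrow> tau_exit D x0 B p}"
      obtain \<omega> ws where pp: "p = (\<omega>, ws)" by (cases p)
      have om: "\<omega> \<in> space M" and ws: "ws \<in> space ?W" using p pp Psp by auto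
      show "p \<in> NG \<union> N2"
      proof (rule ccontr)
        assume "p \<notin> NG \<union> N2"
        then have nG: "\<omega> \<notin> G" and nW: "ws \<notin> NW" using pp om ws by (auto simp: NG_def N2_def)
        have io: "\<exists>k\<ge>K. 1/2 \<le> norm (ws k)" for K
          using nW ws unfolding NW_def by (auto simp: not_less)
        have cont: "continuous_on {0..} (\<lambda>u. B u \<omega>)" by (rule bm_cont[OF bm om])
        define e where "e = Inf (E \<omega>)"
        have eE: "e \<in> E \<omega>" "\<And>u. u \<in> E \<omega> \<Longrightarrow> e \<le> u" "tau_exit D x0 B (\<omega>, ws) = ennreal e"
          using E_props[OF om nG, of ws] by (auto simp: e_def)
        have e0: "0 \<le> e" "x0 + B e \<omega> \<in> frontier D" using eE(1) by (auto simp: E_def)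
        define sq where "sq k = enn2real (tau_seq D x0 \<epsilon> B k (\<omega>, ws))" for k
        have sqf: "tau_seq D x0 \<epsilon> B k (\<omega>, ws) = ennreal (sq k)" "0 \<le> sq k" "sq k \<le> e" for k
          using tau_fin[OF om nG ws, of k] by (auto simp: sq_def e_def)
        have rel: "sq k \<le> sq (Suc k) \<and>
          norm (B (sq (Suc k)) \<omega> - B (sq k) \<omega>) = min \<epsilon> (infdist (x0 + B (sq k) \<omega>) (frontier D)) * norm (ws k)" for k
          unfolding sq_def by (rule tau_step_rel[where B=B and \<omega>=\<omega>, OF cont e0 Wsp[OF ws] eps])
        have x00: "x0 + B 0 \<omega> \<in> D" using bm_zero[OF bm om] x0D by simp
        have inD: "x0 + B s \<omega> \<in> D" if "0 \<le> s" "s < e" for s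
        proof (rule in_D_before[of "\<lambda>u. B u \<omega>", OF cont x00 that(1)])
          fix v assume v: "0 \<le> v" "v \<le> s"
          show "x0 + B v \<omega> \<notin> frontier D"
          proof
            assume "x0 + B v \<omega> \<in> frontier D"
            then have "v \<in> E \<omega>" using v by (simp add: E_def)
            then have "e \<le> v" by (rule eE(2))
            then show False using v that by simp
          qed
        qed
        have "sq \<longlonglongrightarrow> e"
          by (rule conv_abstract[where b="\<lambda>u. B u \<omega>", OF cont Dopen fD sqf(2) sqf(3) _ inD _ eps io])
             (use rel in auto)
        then have "(\<lambda>k. ennreal (sq k)) \<longlonglongrightarrow> ennreal e" by (rule tendsto_ennrealI)
        then have "(\<lambda>k. tau_seq D x0 \<epsilon> B k p) \<longlonglongrightarrow> tau_exit D x0 B p"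
          using sqf(1) eE(3) pp by simp
        then show False using p by simp
      qed
    qed
  qed
  show ?thesis using st_k st_e ae by blast
qed


end
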